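(* Let $q$ be a prime power. The number of triples $(\lambda_0,\lambda_1,\lambda_2)\in\mathbb{F}_q^3$ for which the polynomial $p(x)=x^3-\lambda_2x^2-\lambda_1x-\lambda_0$ is irreducible over $\mathbb{F}_q$ and the polynomial $r(x)=x^3+\lambda_2x^2-(\lambda_1-1)x+\lambda_0$ is reducible over $\mathbb{F}_q$ is at least $\frac{q(q-1)^2}{9}-\frac{2(q-1)}{3}$. *)

theory Defs
  imports "HOL-Computational_Algebra.Polynomial_Factorial"
begin

end

theory Submission
  imports Defs
begin

lemma cubic_irred_iff:
  fixes p :: "'a::field poly"
  assumes "degree p = 3"
  shows "irreducible p \<longleftrightarrow> (\<forall>x. poly p x \<noteq> 0)"
proof
  assume irr: "irreducible p"
  show "\<forall>x. poly p x \<noteq> 0"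
  proof (intro allI notI)
    fix x assume "poly p x = 0"
    then have "[:-x,1:] dvd p" by (simp add: poly_eq_0_iff_dvd)
    then obtain k where k: "p = [:-x,1:] * k" by (elim dvdE)
    from irreducibleD[OF irr k] have "is_unit [:-x,1:] \<or> is_unit k" .
    moreover have "\<not> is_unit [:-x,1:]" by (simp add: is_unit_iff_degree)
    moreover have "k \<noteq> 0" using k assms by auto
    ultimately have "degree k = 0" by (simp add: is_unit_iff_degree)
    moreover have "degree p = degree [:-x,1:] + degree k" unfolding k
      by (rule degree_mult_eq) (use \<open>k \<noteq> 0\<close> in auto)
    ultimately have "degree p = 1" by simp
    with assms show False by simp
  qed
next
  assume nr: "\<forall>x. poly p x \<noteq> 0"
  have p0: "p \<noteq> 0" using assms by auto
  show "irreducible p"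
  proof (rule irreducibleI)
    show "p \<noteq> 0" by fact
    show "\<not> is_unit p" using p0 assms by (simp add: is_unit_iff_degree)
    fix a b assume ab: "p = a * b"
    then have a0: "a \<noteq> 0" and b0: "b \<noteq> 0" using p0 by auto
    have dsum: "degree a + degree b = 3" using ab a0 b0 assms by (simp add: degree_mult_eq)
    have noroot: "\<And>f. f dvd p \<Longrightarrow> degree f = 1 \<Longrightarrow> False"
    proof -
      fix f :: "'a poly" assume fd: "f dvd p" and d1: "degree f = 1"
      define u where "u = coeff f 0"
      define v where "v = coeff f 1"
      have f: "f = [:u, v:]" unfolding u_def v_def
      proof (rule poly_eqI)
        fix n show "coeff f n = coeff [:coeff f 0, coeff f 1:] n"
          using d1 by (cases n) (auto simp: coeff_pCons coeff_eq_0 split: nat.split)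
      qed
      have "f \<noteq> 0" using d1 by auto
      then have v: "v \<noteq> 0" unfolding v_def using d1 by (metis leading_coeff_0_iff)
      have "poly f (-u/v) = 0" using f v by simp
      then have "poly p (-u/v) = 0" using fd by (metis dvdE mult_eq_0_iff poly_mult)
      with nr show False by blast
    qed
    show "is_unit a \<or> is_unit b"
    proof (rule ccontr)
      assume "\<not> (is_unit a \<or> is_unit b)"
      then have "degree a \<ge> 1" "degree b \<ge> 1" using a0 b0 by (auto simp: is_unit_iff_degree)
      then have "degree a = 1 \<or> degree b = 1" using dsum by linarith
      then show False using noroot[of a] noroot[of b] ab by auto
    qed
  qed
qed
lemma ind_bound:
  fixes N :: nat assumes "N \<le> 3"
  shows "(if N = 0 then 1 else 0) \<ge> 1 - real N + (real N ^ 2 - real N) / 3"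
proof -
  have "N = 0 \<or> N = 1 \<or> N = 2 \<or> N = 3" using assms by auto
  then show ?thesis by (auto simp: power2_eq_square)
qed

lemma lines_count:
  fixes U :: "'p set" and X :: "'x set" and on :: "'p \<Rightarrow> 'x \<Rightarrow> bool"
  assumes fU: "finite U" and fX: "finite X"
  and L: "\<And>x. x \<in> X \<Longrightarrow> card {z\<in>U. on z x} = m"
  and P: "\<And>x y. x \<in> X \<Longrightarrow> y \<in> X \<Longrightarrow> x \<noteq> y \<Longrightarrow> card {z\<in>U. on z x \<and> on z y} = 1"
  and B: "\<And>z. z \<in> U \<Longrightarrow> card {x\<in>X. on z x} \<le> 3"
  shows "real (card {z\<in>U. \<forall>x\<in>X. \<not> on z x}) \<ge>
         real (card U) - real (card X) * real m + real (card X) * (real (card X) - 1) / 3"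
proof -
  define N where "N z = card {x\<in>X. on z x}" for z
  define ind where "ind z x = (if on z x then 1 else 0 :: real)" for z x
  have Nsum: "real (N z) = (\<Sum>x\<in>X. ind z x)" for z
    unfolding N_def ind_def using fX by (simp add: sum.If_cases Int_def)
  have Lsum: "(\<Sum>z\<in>U. ind z x) = real m" if "x \<in> X" for x
    unfolding ind_def using fU L[OF that] by (simp add: sum.If_cases Int_def)
  have Psum: "(\<Sum>z\<in>U. ind z x * ind z y) = 1" if "x \<in> X" "y \<in> X" "x \<noteq> y" for x y
  proof -
    have "(\<Sum>z\<in>U. ind z x * ind z y) = (\<Sum>z\<in>U. if on z x \<and> on z y then 1 else 0)"
      unfolding ind_def by (intro sum.cong) auto
    also have "\<dots> = real (card {z\<in>U. on z x \<and> on z y})" using fU by (simp add: sum.If_cases Int_def)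
    finally show ?thesis using P[OF that] by simp
  qed
  have S1: "(\<Sum>z\<in>U. real (N z)) = real (card X) * real m"
  proof -
    have "(\<Sum>z\<in>U. real (N z)) = (\<Sum>x\<in>X. \<Sum>z\<in>U. ind z x)"
      unfolding Nsum by (rule sum.swap)
    also have "\<dots> = (\<Sum>x\<in>X. real m)" by (intro sum.cong) (auto simp: Lsum)
    finally show ?thesis by simp
  qed
  have S2: "(\<Sum>z\<in>U. real (N z) ^ 2) = real (card X) * (real m + real (card X) - 1)"
  proof -
    have "(\<Sum>z\<in>U. real (N z) ^ 2) = (\<Sum>z\<in>U. \<Sum>x\<in>X. \<Sum>y\<in>X. ind z x * ind z y)"
      unfolding Nsum power2_eq_square sum_product by simp
    also have "\<dots> = (\<Sum>x\<in>X. \<Sum>y\<in>X. \<Sum>z\<in>U. ind z x * ind z y)"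
      by (subst sum.swap) (subst (2) sum.swap, simp)
    also have "\<dots> = (\<Sum>x\<in>X. real m + real (card X) - 1)"
    proof (intro sum.cong refl)
      fix x assume x: "x \<in> X"
      have "(\<Sum>y\<in>X. \<Sum>z\<in>U. ind z x * ind z y) = (\<Sum>y\<in>insert x (X - {x}). \<Sum>z\<in>U. ind z x * ind z y)"
        using x by (simp add: insert_absorb)
      also have "\<dots> = (\<Sum>z\<in>U. ind z x * ind z x) + (\<Sum>y\<in>X - {x}. \<Sum>z\<in>U. ind z x * ind z y)"
        by (rule sum.insert) (use fX in auto)
      also have "(\<Sum>z\<in>U. ind z x * ind z x) = real m"
      proof -
        have "(\<Sum>z\<in>U. ind z x * ind z x) = (\<Sum>z\<in>U. ind z x)"
          by (intro sum.cong) (auto simp: ind_def)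
        then show ?thesis using Lsum[OF x] by simp
      qed
      also have "(\<Sum>y\<in>X - {x}. \<Sum>z\<in>U. ind z x * ind z y) = (\<Sum>y\<in>X - {x}. 1)"
        by (intro sum.cong refl Psum) (use x in auto)
      also have "\<dots> = real (card X) - 1" proof -
        have "card X \<ge> 1" using fX x by (metis One_nat_def Suc_leI card_gt_0_iff empty_iff)
        then show ?thesis using fX x by (simp add: of_nat_diff)
      qed
      finally show "(\<Sum>y\<in>X. \<Sum>z\<in>U. ind z x * ind z y) = real m + real (card X) - 1" by simp
    qed
    finally show ?thesis by simp
  qed
  have "real (card {z\<in>U. \<forall>x\<in>X. \<not> on z x}) = (\<Sum>z\<in>U. if N z = 0 then 1 else 0)"
  proof -
    have "{z\<in>U. \<forall>x\<in>X. \<not> on z x} = {z\<in>U. N z = 0}"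
      unfolding N_def using fX by auto
    then show ?thesis using fU by (simp add: sum.If_cases Int_def)
  qed
  also have "\<dots> \<ge> (\<Sum>z\<in>U. 1 - real (N z) + (real (N z) ^ 2 - real (N z)) / 3)"
    by (intro sum_mono ind_bound) (use B in \<open>auto simp: N_def\<close>)
  ultimately have "real (card {z\<in>U. \<forall>x\<in>X. \<not> on z x}) \<ge>
      (\<Sum>z\<in>U. 1 - real (N z) + (real (N z) ^ 2 - real (N z)) / 3)" by simp
  also have "(\<Sum>z\<in>U. 1 - real (N z) + (real (N z) ^ 2 - real (N z)) / 3)
      = real (card U) - (\<Sum>z\<in>U. real (N z)) + ((\<Sum>z\<in>U. real (N z) ^ 2) - (\<Sum>z\<in>U. real (N z))) / 3"
    by (simp add: sum.distrib sum_subtractf sum_divide_distrib[symmetric])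
  finally show ?thesis unfolding S1 S2 by (simp add: algebra_simps)
qed
definition fp :: "'a::field \<Rightarrow> 'a \<Rightarrow> 'a \<Rightarrow> 'a \<Rightarrow> 'a" where
  "fp l0 l1 l2 x = x^3 - l2*x^2 - l1*x - l0"

definition Kc :: "'a::field \<Rightarrow> 'a \<Rightarrow> 'a" where
  "Kc c x = (x^3 - c^3 - c) / (x - c)"

lemma roots_le3:
  fixes l0 l1 l2 k :: "'a::field"
  shows "card {x. fp l0 l1 l2 x + k * x = 0} \<le> 3"
proof -
  let ?P = "[:-l0, k - l1, -l2, 1:]"
  have "poly ?P x = fp l0 l1 l2 x + k * x" for x
    by (simp add: fp_def algebra_simps power2_eq_square power3_eq_cube)
  moreover have "?P \<noteq> 0" by simp
  moreover have "degree ?P = 3" by simp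
  ultimately show ?thesis using card_poly_roots_bound[of ?P] by simp
qed

lemma fpT:
  fixes a b c x :: "'a::field"
  assumes "x \<noteq> c"
  shows "fp (c^3 - b*c^2 - a*c + c) a b x = (x - c) * (Kc c x - a - b*(x+c))"
proof -
  have "(x - c) * Kc c x = x^3 - c^3 - c" unfolding Kc_def using assms by simp
  then show ?thesis unfolding fp_def by (simp add: algebra_simps power2_eq_square power3_eq_cube)
qed

lemma onT_iff:
  fixes a b c x :: "'a::field"
  assumes "x \<noteq> c"
  shows "fp (c^3 - b*c^2 - a*c + c) a b x = 0 \<longleftrightarrow> a + b*(x+c) = Kc c x"
proof -
  have "fp (c^3 - b*c^2 - a*c + c) a b x = 0 \<longleftrightarrow> Kc c x - a - b*(x+c) = 0"
    using assms by (simp add: fpT)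
  also have "\<dots> \<longleftrightarrow> a + b*(x+c) = Kc c x" by (metis add.commute diff_diff_eq eq_iff_diff_eq_0)
  finally show ?thesis .
qed

lemma onT_iff2:
  fixes a b c x :: "'a::field"
  assumes "x \<noteq> c"
  shows "fp (c^3 - b*c^2 - a*c + c) a b x = 0 \<longleftrightarrow> a = Kc c x - b*(x+c)"
  unfolding onT_iff[OF assms] by (metis add_diff_cancel_right' diff_add_cancel)

lemma per_c:
  fixes c :: "'a::{finite,field}"
  assumes c0: "c \<noteq> 0" and qdef: "q = card (UNIV :: 'a set)"
  shows "real (card {(a,b). \<forall>x. fp (c^3 - b*c^2 - a*c + c) a b x \<noteq> 0})
    \<ge> real q ^ 2 - (real q - 1) * real q
       + (real q - 1) * (real q - 2) / 3"
proof -
  define on where "on z x = (case z of (a,b) \<Rightarrow> fp (c^3 - b*c^2 - a*c + c) a b x = 0)"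
    for z :: "'a \<times> 'a" and x
  define X where "X = (UNIV :: 'a set) - {c}"
  have cardX: "real (card X) = real q - 1"
    proof -
    have "card (UNIV::'a set) \<ge> 1" by (simp add: Suc_leI finite_UNIV_card_ge_0)
    then show ?thesis unfolding X_def qdef by (simp add: card_Diff_subset of_nat_diff)
  qed
  have main: "real (card {z\<in>(UNIV::('a\<times>'a) set). \<forall>x\<in>X. \<not> on z x}) \<ge>
         real (card (UNIV::('a\<times>'a) set)) - real (card X) * real q
          + real (card X) * (real (card X) - 1) / 3"
  proof (rule lines_count)
    show "finite (UNIV :: ('a\<times>'a) set)" by simp
    show "finite X" by simp
  next
    fix x assume x: "x \<in> X"
    then have xc: "x \<noteq> c" by (simp add: X_def)
    have "{z\<in>UNIV. on z x} = (\<lambda>b. (Kc c x - b*(x+c), b)) ` UNIV"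
      using xc by (auto simp: on_def onT_iff2 image_iff)
    moreover have "inj (\<lambda>b::'a. (Kc c x - b*(x+c), b))" by (auto intro: injI)
    ultimately show "card {z\<in>UNIV. on z x} = q" by (simp add: card_image qdef)
  next
    fix x y assume x: "x \<in> X" and y: "y \<in> X" and xy: "x \<noteq> y"
    then have xc: "x \<noteq> c" and yc: "y \<noteq> c" by (auto simp: X_def)
    define b0 where "b0 = (Kc c x - Kc c y) / (x - y)"
    define a0 where "a0 = Kc c x - b0 * (x + c)"
    have "{z\<in>UNIV. on z x \<and> on z y} = {(a0, b0)}"
    proof (intro equalityI subsetI)
      fix z assume "z \<in> {z\<in>UNIV. on z x \<and> on z y}"
      then obtain a b where z: "z = (a,b)" and e1: "a + b*(x+c) = Kc c x" and e2: "a + b*(y+c) = Kc c y"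
        by (cases z) (auto simp: on_def onT_iff xc yc)
      have "b * (x - y) = (a + b*(x+c)) - (a + b*(y+c))" by (simp add: algebra_simps)
      then have "b * (x - y) = Kc c x - Kc c y" using e1 e2 by simp
      then have "b = b0" unfolding b0_def using xy by (simp add: field_simps)
      then have "a = a0" unfolding a0_def using e1 by (simp add: algebra_simps)
      then show "z \<in> {(a0, b0)}" using z \<open>b = b0\<close> by simp
    next
      fix z assume "z \<in> {(a0, b0)}"
      then have z: "z = (a0, b0)" by simp
      have e1: "a0 + b0*(x+c) = Kc c x" unfolding a0_def by simp
      have "b0 * (x - y) = Kc c x - Kc c y" unfolding b0_def using xy by simp
      then have e2: "a0 + b0*(y+c) = Kc c y" unfolding a0_def by (simp add: algebra_simps)
      show "z \<in> {z\<in>UNIV. on z x \<and> on z y}" using z e1 e2 by (simp add: on_def onT_iff xc yc)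
    qed
    then show "card {z\<in>UNIV. on z x \<and> on z y} = 1" by simp
  next
    fix z :: "'a \<times> 'a"
    obtain a b where z: "z = (a,b)" by (cases z)
    have "{x\<in>X. on z x} \<subseteq> {x. fp (c^3 - b*c^2 - a*c + c) a b x + 0 * x = 0}"
      by (auto simp: on_def z)
    then have "card {x\<in>X. on z x} \<le> card {x. fp (c^3 - b*c^2 - a*c + c) a b x + 0 * x = 0}"
      by (intro card_mono) auto
    also have "\<dots> \<le> 3" by (rule roots_le3)
    finally show "card {x\<in>X. on z x} \<le> 3" .
  qed
  have eqset: "{z\<in>(UNIV::('a\<times>'a) set). \<forall>x\<in>X. \<not> on z x}
      = {(a,b). \<forall>x. fp (c^3 - b*c^2 - a*c + c) a b x \<noteq> 0}"
  proof -
    have "fp (c^3 - b*c^2 - a*c + c) a b c \<noteq> 0" for a b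
      using c0 by (simp add: fp_def algebra_simps)
    then show ?thesis unfolding X_def on_def by auto
  qed
  have "real (card (UNIV::('a\<times>'a) set)) = real q ^ 2"
    unfolding UNIV_Times_UNIV[symmetric] card_cartesian_product qdef by (simp add: power2_eq_square)
  then show ?thesis using main unfolding eqset cardX by (simp add: algebra_simps)
qed

lemma card_filter_sum:
  assumes "finite S"
  shows "card {t\<in>S. P t} = (\<Sum>t\<in>S. if P t then 1 else 0)"
  using assms by (simp add: sum.If_cases Int_def)

theorem lemma4p5:
  fixes q :: nat
  assumes "q = card (UNIV :: 'a :: {finite, field} set)"
  shows "real (card {(l0 :: 'a, l1 :: 'a, l2 :: 'a).
            irreducible [:- l0, - l1, - l2, 1:] \<and>
            \<not> irreducible [:l0, - (l1 - 1), l2, 1:]})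
         \<ge> real q * (real q - 1)^2 / 9 - 2 * (real q - 1) / 3"
proof -
  define S where "S = {(l0 :: 'a, l1 :: 'a, l2 :: 'a). (\<forall>x. fp l0 l1 l2 x \<noteq> 0) \<and> (\<exists>c. fp l0 l1 l2 c + c = 0)}"
  define G where "G t c = (case t of (l0, l1, l2) \<Rightarrow> fp l0 l1 l2 c + c = 0)" for t :: "'a \<times> 'a \<times> 'a" and c
  define A where "A c = {t\<in>S. G t c}" for c
  define U where "U c = {(a,b). \<forall>x. fp (c^3 - b*c^2 - a*c + c) a b x \<noteq> 0}" for c :: 'a
  have setEq: "{(l0 :: 'a, l1 :: 'a, l2 :: 'a).
            irreducible [:- l0, - l1, - l2, 1:] \<and>
            \<not> irreducible [:l0, - (l1 - 1), l2, 1:]} = S"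
  proof -
    have "irreducible [:- l0, - l1, - l2, 1:] \<longleftrightarrow> (\<forall>x. fp l0 l1 l2 x \<noteq> 0)" for l0 l1 l2 :: 'a
    proof -
      have "poly [:- l0, - l1, - l2, 1:] x = fp l0 l1 l2 x" for x
        by (simp add: fp_def algebra_simps power2_eq_square power3_eq_cube)
      then show ?thesis by (subst cubic_irred_iff) auto
    qed
    moreover have "\<not> irreducible [:l0, - (l1 - 1), l2, 1:] \<longleftrightarrow> (\<exists>c. fp l0 l1 l2 c + c = 0)" for l0 l1 l2 :: 'a
    proof -
      have pr: "poly [:l0, - (l1 - 1), l2, 1:] a = - (fp l0 l1 l2 (-a) + (-a))" for a
        by (simp add: fp_def algebra_simps power2_eq_square power3_eq_cube)
      have "\<not> irreducible [:l0, - (l1 - 1), l2, 1:] \<longleftrightarrow> (\<exists>a. poly [:l0, - (l1 - 1), l2, 1:] a = 0)"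
        by (subst cubic_irred_iff) auto
      also have "\<dots> \<longleftrightarrow> (\<exists>c. fp l0 l1 l2 c + c = 0)"
        unfolding pr by (metis minus_minus neg_equal_0_iff_equal)
      finally show ?thesis .
    qed
    ultimately show ?thesis unfolding S_def by auto
  qed
  have q1: "q \<ge> 1" using assms by (simp add: Suc_leI finite_UNIV_card_ge_0)
  have cardA: "card (A c) = card (U c)" if c0: "c \<noteq> 0" for c
  proof -
    let ?T = "\<lambda>(a,b). (c^3 - b*c^2 - a*c + c, a, b)"
    have "A c = ?T ` U c"
    proof (intro equalityI subsetI)
      fix t assume t: "t \<in> A c"
      obtain l0 l1 l2 where tt: "t = (l0, l1, l2)" by (cases t) auto
      have g: "fp l0 l1 l2 c + c = 0" and nr: "\<forall>x. fp l0 l1 l2 x \<noteq> 0"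
        using t unfolding A_def G_def S_def tt by auto
      have l0: "l0 = c^3 - l2*c^2 - l1*c + c"
        using g unfolding fp_def by (simp add: algebra_simps)
      then have "(l1, l2) \<in> U c" using nr unfolding U_def by simp
      then show "t \<in> ?T ` U c" unfolding tt using l0 by (intro image_eqI[where x="(l1,l2)"]) auto
    next
      fix t assume "t \<in> ?T ` U c"
      then obtain a b where ab: "(a,b) \<in> U c" and tt: "t = (c^3 - b*c^2 - a*c + c, a, b)" by auto
      have "fp (c^3 - b*c^2 - a*c + c) a b c + c = 0" by (simp add: fp_def)
      then show "t \<in> A c" using ab unfolding A_def G_def S_def U_def tt by auto
    qed
    moreover have "inj_on ?T (U c)" by (auto intro!: inj_onI)
    ultimately show ?thesis by (simp add: card_image)
  qed
  have sumle: "(\<Sum>c\<in>UNIV - {0}. card (A c)) \<le> 3 * card S"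
  proof -
    have "(\<Sum>c\<in>UNIV - {0}. card (A c)) = (\<Sum>c\<in>UNIV - {0}. \<Sum>t\<in>S. if G t c then 1 else 0)"
      unfolding A_def by (intro sum.cong refl card_filter_sum) simp
    also have "\<dots> = (\<Sum>t\<in>S. \<Sum>c\<in>UNIV - {0}. if G t c then 1 else 0)" by (rule sum.swap)
    also have "\<dots> = (\<Sum>t\<in>S. card {c\<in>UNIV - {0}. G t c})"
      by (intro sum.cong refl card_filter_sum[symmetric]) simp
    also have "\<dots> \<le> (\<Sum>t\<in>S. 3)"
    proof (intro sum_mono)
      fix t :: "'a \<times> 'a \<times> 'a"
      obtain l0 l1 l2 where tt: "t = (l0, l1, l2)" by (cases t) auto
      have "{c\<in>UNIV - {0}. G t c} \<subseteq> {x. fp l0 l1 l2 x + 1 * x = 0}" by (auto simp: G_def tt)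
      then have "card {c\<in>UNIV - {0}. G t c} \<le> card {x. fp l0 l1 l2 x + 1 * x = 0}" by (intro card_mono) auto
      also have "\<dots> \<le> 3" by (rule roots_le3)
      finally show "card {c\<in>UNIV - {0}. G t c} \<le> 3" .
    qed
    finally show ?thesis by simp
  qed
  define B where "B = real q ^ 2 - (real q - 1) * real q + (real q - 1) * (real q - 2) / 3"
  have "real (3 * card S) \<ge> (\<Sum>c\<in>UNIV - {0}. real (card (A c)))"
    using sumle by (metis of_nat_le_iff of_nat_sum)
  moreover have "(\<Sum>c\<in>UNIV - {0}. real (card (A c))) \<ge> (\<Sum>c\<in>(UNIV::'a set) - {0}. B)"
  proof (intro sum_mono)
    fix c :: 'a assume "c \<in> UNIV - {0}"
    then have c0: "c \<noteq> 0" by simp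
    show "B \<le> real (card (A c))" unfolding cardA[OF c0] B_def U_def by (rule per_c[OF c0 assms])
  qed
  moreover have "(\<Sum>c\<in>(UNIV::'a set) - {0}. B) = (real q - 1) * B"
  proof -
    have "card ((UNIV::'a set) - {0}) = q - 1" using assms by (simp add: card_Diff_subset)
    then have "real (card ((UNIV::'a set) - {0})) = real q - 1" using q1 by (simp add: of_nat_diff)
    then show ?thesis by simp
  qed
  ultimately have "3 * real (card S) \<ge> (real q - 1) * B" by linarith
  moreover have "(real q - 1) * B / 3 \<ge> real q * (real q - 1)^2 / 9 - 2 * (real q - 1) / 3"
  proof -
    have "(real q - 1) * B / 3 - (real q * (real q - 1)^2 / 9 - 2 * (real q - 1) / 3)
        = (real q - 1) * (real q + 8) / 9"
      unfolding B_def by (simp add: field_simps power2_eq_square)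
    moreover have "(real q - 1) * (real q + 8) / 9 \<ge> 0" using q1 by simp
    ultimately show ?thesis by linarith
  qed
  ultimately show ?thesis unfolding setEq by linarith
qed

end
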